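(* Let $\overline\tau$ be a real random variable with probability density $f_{\overline\tau}$ and $\mathbb E|\overline\tau|<\infty$, let $s_n>0$, and define $\overline\theta=\mathbb E[\overline\tau\,\mathbf 1\{\overline\tau>0\}]$ and $\overline\theta_{\mathrm{sig}}=\mathbb E\left[\dfrac{\overline\tau}{1+\exp(-s_n\overline\tau)}\right]$. Let $f_U$ be the density of a logistic random variable $U\sim\mathrm{Logistic}(0,1/s_n)$ (location $0$, scale $1/s_n$), i.e. $f_U(u)=\dfrac{s_ne^{-s_nu}}{(1+e^{-s_nu})^2}$, with $U$ independent of $\overline\tau$. Then \[ \overline\theta_{\mathrm{sig}}-\overline\theta=-\int_0^\infty f_U(u)\left[\int_0^u t f_{\overline\tau}(t)\,dt-\int_{-u}^0 t f_{\overline\tau}(t)\,dt\right]du. \]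
   Context: In the paper, $\overline\tau=\overline\tau(X)=\overline\gamma_1(X)-\overline\gamma_2(X)$ is the conditional average treatment effect, $\overline\gamma_1(X)=\mathbb E[Y\mid Z,D=1]$, $\overline\gamma_2(X)=\mathbb E[Y\mid Z,D=0]$; $\overline\theta$ is the maximized average welfare gain and $\overline\theta_{\mathrm{sig}}$ its sigmoid-smoothed version with smoothing parameter $s_n$. *)

theory Defs
  imports "HOL-Probability.Probability"
begin

definition logistic_density :: "real \<Rightarrow> real \<Rightarrow> real" where
  "logistic_density s u = s * exp (- s * u) / (1 + exp (- s * u))^2"

end

theory Submission imports Defs "HOL-Probability.Probability" begin

lemma div_ge1_abs: "1 \<le> (e::real) \<Longrightarrow> \<bar>t / e\<bar> \<le> \<bar>t\<bar>"
proof -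
  assume e: "1 \<le> e"
  have "\<bar>t / e\<bar> = \<bar>t\<bar> / e" using e by (simp add: abs_divide)
  also have "\<dots> \<le> \<bar>t\<bar> / 1" using e by (intro divide_left_mono) auto
  finally show ?thesis by simp
qed
lemma one_le_onepexp: "(1::real) \<le> 1 + exp y" using exp_gt_zero[of y] by linarith

lemma onepexp_ne[simp]: "(1::real) + exp y \<noteq> 0"
  by (smt (verit) exp_gt_zero)

lemma logistic_density_borel[measurable]: "logistic_density s \<in> borel_measurable borel"
  unfolding logistic_density_def by measurable

lemma logistic_deriv:
  assumes "0 < s"
  shows "((\<lambda>x. - 1 / (1 + exp (s * x))) has_real_derivative logistic_density s x) (at x)"
proof -
  have e: "exp (- s * x) = inverse (exp (s*x))" by (simp add: exp_minus)
  have "logistic_density s x = s * exp (s * x) / (1 + exp (s * x))^2"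
    unfolding logistic_density_def e
    by (simp add: field_simps power2_eq_square)
  moreover have "((\<lambda>x. - 1 / (1 + exp (s * x))) has_real_derivative s * exp (s * x) / (1 + exp (s * x))^2) (at x)"
    by (auto intro!: derivative_eq_intros simp: power2_eq_square add_pos_pos)
       (simp add: field_simps add_pos_pos)?
  ultimately show ?thesis by simp
qed

lemma logistic_tail:
  assumes "0 < s"
  shows "set_integrable lborel {a..} (logistic_density s)"
    "(\<integral>u. indicator {a..} u * logistic_density s u \<partial>lborel) = 1 / (1 + exp (s * a))"
proof -
  let ?F = "\<lambda>x. - 1 / (1 + exp (s * x))"
  have pos: "0 \<le> logistic_density s x" for x
    using assms by (simp add: logistic_density_def)
  have cont: "isCont (logistic_density s) x" for x
    unfolding logistic_density_def by (auto intro!: continuous_intros simp: add_pos_pos) 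
  have lim1: "((?F \<circ> real_of_ereal) \<longlongrightarrow> ?F a) (at_right (ereal a))"
    unfolding ereal_tendsto_simps by (auto intro!: tendsto_eq_intros simp: add_pos_pos)
  have lim2: "((?F \<circ> real_of_ereal) \<longlongrightarrow> 0) (at_left \<infinity>)"
    unfolding ereal_tendsto_simps
  proof (rule tendsto_divide_0[OF tendsto_const])
    have "filterlim (\<lambda>x. s * x) at_top at_top"
      using assms by (intro filterlim_tendsto_pos_mult_at_top[OF tendsto_const] filterlim_ident) auto
    then have "filterlim (\<lambda>x. exp (s * x)) at_top at_top"
      by (rule filterlim_compose[OF exp_at_top])
    then have "filterlim (\<lambda>x. 1 + exp (s * x)) at_top at_top"
      by (rule filterlim_tendsto_add_at_top[OF tendsto_const])
    then show "filterlim (\<lambda>x. 1 + exp (s * x)) at_infinity at_top"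
      by (rule filterlim_at_top_imp_at_infinity)
  qed
  have ei: "einterval (ereal a) \<infinity> = {a<..}" by (auto simp: einterval_def)
  note R = interval_integral_FTC_nonneg[of "ereal a" \<infinity> ?F "logistic_density s" "?F a" 0,
     OF _ logistic_deriv[OF assms] cont _ lim1 lim2]
  have si: "set_integrable lborel {a<..} (logistic_density s)" using R(1) pos ei by auto
  have ae: "AE u in lborel. indicator {a..} u * logistic_density s u = indicator {a<..} u * logistic_density s u"
    using AE_lborel_singleton[of a] by eventually_elim (auto simp: indicator_def)
  show "set_integrable lborel {a..} (logistic_density s)"
    using si unfolding set_integrable_def
    by (rule integrable_cong_AE_imp) (use ae in \<open>auto elim!: eventually_mono\<close>)
  have "(\<integral>u. indicator {a..} u * logistic_density s u \<partial>lborel) = (LBINT u:{a<..}. logistic_density s u)"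
    unfolding set_lebesgue_integral_def by (rule integral_cong_AE) (use ae in auto)
  also have "\<dots> = 0 - ?F a" using R(2) pos by (simp add: interval_integral_to_infinity_eq)
  finally show "(\<integral>u. indicator {a..} u * logistic_density s u \<partial>lborel) = 1 / (1 + exp (s * a))" by simp
qed

theorem proposition2:
  fixes M :: "'a measure" and tau :: "'a \<Rightarrow> real" and f :: "real \<Rightarrow> real" and s :: real
  assumes "prob_space M"
    and "\<And>t. 0 \<le> f t"
    and "distributed M lborel tau (\<lambda>t. ennreal (f t))"
    and "integrable M tau"
    and "0 < s"
  shows "prob_space.expectation M (\<lambda>\<omega>. tau \<omega> / (1 + exp (- s * tau \<omega>)))
         - prob_space.expectation M (\<lambda>\<omega>. tau \<omega> * indicator {0<..} (tau \<omega>))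
       = - (LBINT u:{0..}. logistic_density s u *
              ((LBINT t:{0..u}. t * f t) - (LBINT t:{-u..0}. t * f t)))"
proof -
  note dist = assms(3)
  have fm[measurable]: "f \<in> borel_measurable borel"
    using distributed_real_measurable[OF _ dist] assms(2) by simp
  define G where "G t = t * f t" for t
  define h where "h t = 1 / (1 + exp (- s * t)) - indicator {0<..} t" for t :: real
  define k where "k t u = (if 0 \<le> t \<and> t \<le> u then 1 else 0) - (if -u \<le> t \<and> t \<le> 0 then 1 else (0::real))" for t u :: real
  define F where "F u t = indicator {0..} u * logistic_density s u * (G t * k t u)" for u t :: real
  have Gm[measurable]: "G \<in> borel_measurable borel" unfolding G_def by measurable
  have intG0: "integrable lborel (\<lambda>t. f t * t)"
    using distributed_integrable[OF dist, of "\<lambda>x. x"] assms(2,4) by simp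
  have intG: "integrable lborel G"
    using intG0 unfolding G_def by (simp add: mult.commute)
  have p_nonneg: "0 \<le> logistic_density s u" for u
    using assms(5) by (simp add: logistic_density_def)
  have E1: "prob_space.expectation M (\<lambda>\<omega>. tau \<omega> / (1 + exp (- s * tau \<omega>)))
      = (\<integral>t. f t * (t / (1 + exp (- s * t))) \<partial>lborel)"
    using distributed_integral[OF dist, of "\<lambda>t. t / (1 + exp (- s * t))"] assms(2) by simp
  have E2: "prob_space.expectation M (\<lambda>\<omega>. tau \<omega> * indicator {0<..} (tau \<omega>))
      = (\<integral>t. f t * (t * indicator {0<..} t) \<partial>lborel)"
    using distributed_integral[OF dist, of "\<lambda>t. t * indicator {0<..} t"] assms(2) by simp
  have int1: "integrable lborel (\<lambda>t. f t * (t / (1 + exp (- s * t))))"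
  proof (rule Bochner_Integration.integrable_bound[OF intG0])
    show "AE t in lborel. norm (f t * (t / (1 + exp (- s * t)))) \<le> norm (f t * t)"
    proof (intro AE_I2)
      fix t
      have tt: "\<bar>t / (1 + exp (- s * t))\<bar> \<le> \<bar>t\<bar>"
        by (rule div_ge1_abs[OF one_le_onepexp])
      show "norm (f t * (t / (1 + exp (- s * t)))) \<le> norm (f t * t)"
        using mult_left_mono[OF tt assms(2)[of t]] assms(2)[of t] by (simp add: abs_mult)
    qed
  qed measurable
  have int2: "integrable lborel (\<lambda>t. f t * (t * indicator {0<..} t))"
    using integrable_mult_indicator[OF _ intG0, of "{0<..}"]
    by (simp add: mult_ac)
  have LHS: "prob_space.expectation M (\<lambda>\<omega>. tau \<omega> / (1 + exp (- s * tau \<omega>)))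
         - prob_space.expectation M (\<lambda>\<omega>. tau \<omega> * indicator {0<..} (tau \<omega>))
       = (\<integral>t. G t * h t \<partial>lborel)"
    unfolding E1 E2 Bochner_Integration.integral_diff[OF int1 int2, symmetric]
    by (rule Bochner_Integration.integral_cong) (auto simp: G_def h_def algebra_simps)
  have inner: "(LBINT t:{0..u}. t * f t) - (LBINT t:{-u..0}. t * f t) = (\<integral>t. G t * k t u \<partial>lborel)" for u
  proof -
    have i1: "integrable lborel (\<lambda>t. indicator {0..u} t *\<^sub>R (t * f t))"
      using integrable_mult_indicator[OF _ intG] unfolding G_def by simp
    have i2: "integrable lborel (\<lambda>t. indicator {-u..0} t *\<^sub>R (t * f t))"
      using integrable_mult_indicator[OF _ intG] unfolding G_def by simp
    show ?thesis
      unfolding set_lebesgue_integral_def Bochner_Integration.integral_diff[OF i1 i2, symmetric]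
      by (rule Bochner_Integration.integral_cong) (auto simp: G_def k_def indicator_def)
  qed
  have RHS1: "(LBINT u:{0..}. logistic_density s u *
              ((LBINT t:{0..u}. t * f t) - (LBINT t:{-u..0}. t * f t)))
       = (\<integral>u. \<integral>t. F u t \<partial>lborel \<partial>lborel)"
    unfolding inner unfolding set_lebesgue_integral_def F_def
    by (simp add: mult.assoc)
  have Fm[measurable]: "case_prod F \<in> borel_measurable (lborel \<Otimes>\<^sub>M lborel)"
    unfolding F_def k_def by measurable
  define B where "B u t = indicator {0..} u * logistic_density s u * \<bar>G t\<bar>" for u t :: real
  have Bm[measurable]: "case_prod B \<in> borel_measurable (lborel \<Otimes>\<^sub>M lborel)"
    unfolding B_def by measurable
  have intP: "integrable lborel (\<lambda>u. indicator {0..} u * logistic_density s u)"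
    using logistic_tail(1)[OF assms(5), of 0] unfolding set_integrable_def by simp
  have intB: "integrable (lborel \<Otimes>\<^sub>M lborel) (case_prod B)"
  proof (rule lborel_pair.Fubini_integrable)
    have "(\<lambda>u. \<integral>t. norm (case_prod B (u, t)) \<partial>lborel)
        = (\<lambda>u. indicator {0..} u * logistic_density s u * (\<integral>t. \<bar>G t\<bar> \<partial>lborel))"
      using p_nonneg by (auto simp: B_def abs_mult intro!: ext)
    then show "integrable lborel (\<lambda>u. \<integral>t. norm (case_prod B (u, t)) \<partial>lborel)"
      using integrable_mult_left[OF intP] by simp
    show "AE u in lborel. integrable lborel (\<lambda>t. case_prod B (u, t))"
      unfolding B_def using intG by auto
  qed measurable
  have intF: "integrable (lborel \<Otimes>\<^sub>M lborel) (case_prod F)"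
  proof (rule Bochner_Integration.integrable_bound[OF intB])
    show "AE x in lborel \<Otimes>\<^sub>M lborel. norm (case_prod F x) \<le> norm (case_prod B x)"
    proof (intro AE_I2)
      fix x :: "real \<times> real"
      obtain u t where x: "x = (u, t)" by (cases x)
      have "\<bar>k t u\<bar> \<le> 1" unfolding k_def by auto
      then have "\<bar>G t * k t u\<bar> \<le> \<bar>G t\<bar>"
        by (simp add: abs_mult mult_left_le)
      then show "norm (case_prod F x) \<le> norm (case_prod B x)"
        unfolding x F_def B_def using p_nonneg[of u]
        by (auto simp: abs_mult indicator_def intro!: mult_left_mono)
    qed
  qed measurable
  have Fub: "(\<integral>u. \<integral>t. F u t \<partial>lborel \<partial>lborel) = (\<integral>t. \<integral>u. F u t \<partial>lborel \<partial>lborel)"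
    using lborel_pair.Fubini_integral[OF intF] by simp
  have innerU: "(\<integral>u. F u t \<partial>lborel) = - (G t * h t)" for t
  proof -
    have eq1: "(\<integral>u. F u t \<partial>lborel) = G t * (\<integral>u. indicator {0..} u * logistic_density s u * k t u \<partial>lborel)"
      unfolding F_def by (simp add: mult_ac)
    consider "t = 0" | "t > 0" | "t < 0" by linarith
    then show ?thesis
    proof cases
      case 1 then show ?thesis unfolding eq1 by (simp add: G_def)
    next
      case 2
      have "(\<integral>u. indicator {0..} u * logistic_density s u * k t u \<partial>lborel)
          = (\<integral>u. indicator {t..} u * logistic_density s u \<partial>lborel)"
        using 2 by (intro Bochner_Integration.integral_cong) (auto simp: k_def indicator_def)
      also have "\<dots> = 1 / (1 + exp (s * t))" by (rule logistic_tail(2)[OF assms(5)])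
      also have "\<dots> = - h t"
        using 2 by (simp add: h_def exp_minus field_simps)
      finally show ?thesis unfolding eq1 by simp
    next
      case 3
      have "(\<integral>u. indicator {0..} u * logistic_density s u * k t u \<partial>lborel)
          = (\<integral>u. - (indicator {-t..} u * logistic_density s u) \<partial>lborel)"
        using 3 by (intro Bochner_Integration.integral_cong) (auto simp: k_def indicator_def)
      also have "\<dots> = - (1 / (1 + exp (s * (-t))))"
        by (simp only: Bochner_Integration.integral_minus logistic_tail(2)[OF assms(5)])
      also have "\<dots> = - h t"
        using 3 by (simp add: h_def)
      finally show ?thesis unfolding eq1 by simp
    qed
  qed
  show ?thesis
    unfolding LHS RHS1 Fub innerU by simp
qed
end
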